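(* Let $I_1,\dots,I_m,I$ be pairwise different nonempty subsets of $\{1,\dots,n\}$, let $\mathcal{A}'=\{H_{I_1},\dots,H_{I_m}\}$ and let $\mathcal{A}''_I=\{H\cap H_I: H\in\mathcal{A}'\}$ (the restriction of $\mathcal{A}'\cup\{H_I\}$ to $H_I$). Then $|\mathcal{A}'|-|\mathcal{A}''_I|$ equals the number of circuit-triples $\{I,A,B\}$ with $A,B\in\{I_1,\dots,I_m\}$.
   Context: $H_J=\ker\big(\sum_{j\in J}x_j\big)\subseteq\mathbb{Q}^n$ for $J\subseteq\{1,\dots,n\}$. A circuit-triple is a set $\{A_1,A_2,A_3\}$ of three pairwise different nonempty subsets such that one of them is the disjoint union of the other two (equivalently, their three linear forms $\sum_{i\in A_j}x_i$ span a $2$-dimensional space). *)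

theory Defs
  imports "HOL-Analysis.Analysis"
begin

text \<open>Coordinates of Q^n are indexed by a finite type 'n (playing the role of {1..n}).
  hyp J is the kernel of the linear form sum_{j in J} x_j.\<close>
definition hyp :: "'n::finite set \<Rightarrow> (rat ^ 'n) set" where
  "hyp J = {x. (\<Sum>j\<in>J. x $ j) = 0}"

definition circuit_triple :: "'n set set \<Rightarrow> bool" where
  "circuit_triple T \<longleftrightarrow> card T = 3 \<and> (\<forall>A\<in>T. A \<noteq> {}) \<and>
     (\<exists>A B C. T = {A, B, C} \<and> A \<inter> B = {} \<and> C = A \<union> B)"

end

theory Submission
  imports Defs
begin

definition ev :: "'n::finite \<Rightarrow> rat ^ 'n" where
  "ev p = (\<chi> k. if k = p then 1 else 0)"

definition ind :: "'n \<Rightarrow> 'n set \<Rightarrow> rat" where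
  "ind p J = (if p \<in> J then 1 else 0)"

lemma sum_ev: "(\<Sum>j\<in>J. ev p $ j) = ind p (J::'n::finite set)"
  unfolding ev_def ind_def by (simp add: sum.delta)

lemma hyp3: "ev p + ev q - ev r \<in> hyp (J::'n::finite set) \<longleftrightarrow> ind p J + ind q J - ind r J = 0"
  unfolding hyp_def by (simp add: sum.distrib sum_subtractf sum_ev)

lemma hyp2: "ev p - ev q \<in> hyp (J::'n::finite set) \<longleftrightarrow> ind p J - ind q J = 0"
  unfolding hyp_def by (simp add: sum_subtractf sum_ev)

lemma hyp1: "ev p \<in> hyp (J::'n::finite set) \<longleftrightarrow> ind p J = 0"
  unfolding hyp_def by (simp add: sum_ev)

lemma facts:
  fixes I A B :: "'n::finite set"
  assumes "hyp I \<inter> hyp A \<subseteq> hyp B"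
  shows F1: "\<And>p q. (p \<in> I \<longleftrightarrow> q \<in> I) \<Longrightarrow> (p \<in> A \<longleftrightarrow> q \<in> A) \<Longrightarrow> (p \<in> B \<longleftrightarrow> q \<in> B)"
    and F2: "\<And>p. p \<notin> I \<Longrightarrow> p \<notin> A \<Longrightarrow> p \<notin> B"
    and F3: "\<And>p q r. p \<in> I - A \<Longrightarrow> q \<in> A - I \<Longrightarrow> r \<in> I \<inter> A \<Longrightarrow>
               (r \<in> B \<longleftrightarrow> (p \<in> B \<or> q \<in> B)) \<and> \<not> (p \<in> B \<and> q \<in> B)"
proof -
  fix p q
  assume "(p \<in> I \<longleftrightarrow> q \<in> I)" "(p \<in> A \<longleftrightarrow> q \<in> A)"
  then have "ev p - ev q \<in> hyp I \<inter> hyp A" by (auto simp: hyp2 ind_def)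
  then have "ev p - ev q \<in> hyp B" using assms by blast
  then show "(p \<in> B \<longleftrightarrow> q \<in> B)" by (auto simp: hyp2 ind_def split: if_splits)
next
  fix p
  assume "p \<notin> I" "p \<notin> A"
  then have "ev p \<in> hyp I \<inter> hyp A" by (auto simp: hyp1 ind_def)
  then have "ev p \<in> hyp B" using assms by blast
  then show "p \<notin> B" by (auto simp: hyp1 ind_def split: if_splits)
next
  fix p q r
  assume "p \<in> I - A" "q \<in> A - I" "r \<in> I \<inter> A"
  then have "ev p + ev q - ev r \<in> hyp I \<inter> hyp A" by (auto simp: hyp3 ind_def)
  then have "ev p + ev q - ev r \<in> hyp B" using assms by blast
  then show "(r \<in> B \<longleftrightarrow> (p \<in> B \<or> q \<in> B)) \<and> \<not> (p \<in> B \<and> q \<in> B)"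
    by (auto simp: hyp3 ind_def split: if_splits)
qed

definition R :: "'n set \<Rightarrow> 'n set \<Rightarrow> 'n set \<Rightarrow> bool" where
  "R I A B \<longleftrightarrow> (I \<inter> A = {} \<and> B = I \<union> A) \<or> (I \<subseteq> A \<and> B = A - I) \<or> (A \<subseteq> I \<and> B = I - A)"

lemma incl_R:
  fixes I A B :: "'n::finite set"
  assumes h: "hyp I \<inter> hyp A \<subseteq> hyp B"
    and ne: "I \<noteq> {}" "A \<noteq> {}" "B \<noteq> {}" and d: "I \<noteq> A" "B \<noteq> I" "B \<noteq> A"
  shows "R I A B"
proof -
  note f1 = F1[OF h] and f2 = F2[OF h] and f3 = F3[OF h]
  have sub: "B \<subseteq> I \<union> A" using f2 by blast
  have decomp: "B = (I \<inter> A \<inter> B) \<union> ((I - A) \<inter> B) \<union> ((A - I) \<inter> B)" using sub by blast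
  have cZ: "I \<inter> A \<subseteq> B \<or> I \<inter> A \<inter> B = {}"
  proof (cases "\<exists>r\<in>I \<inter> A. r \<in> B")
    case True then obtain r where "r \<in> I \<inter> A" "r \<in> B" by blast
    then have "I \<inter> A \<subseteq> B" using f1[of _ r] by blast
    then show ?thesis ..
  qed blast
  have cX: "I - A \<subseteq> B \<or> (I - A) \<inter> B = {}"
  proof (cases "\<exists>r\<in>I - A. r \<in> B")
    case True then obtain r where "r \<in> I - A" "r \<in> B" by blast
    then have "I - A \<subseteq> B" using f1[of _ r] by blast
    then show ?thesis ..
  qed blast
  have cY: "A - I \<subseteq> B \<or> (A - I) \<inter> B = {}"
  proof (cases "\<exists>r\<in>A - I. r \<in> B")
    case True then obtain r where "r \<in> A - I" "r \<in> B" by blast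
    then have "A - I \<subseteq> B" using f1[of _ r] by blast
    then show ?thesis ..
  qed blast
  have eZ: "I \<inter> A \<subseteq> B \<Longrightarrow> I \<inter> A \<inter> B = I \<inter> A" by blast
  have eX: "I - A \<subseteq> B \<Longrightarrow> (I - A) \<inter> B = I - A" by blast
  have eY: "A - I \<subseteq> B \<Longrightarrow> (A - I) \<inter> B = A - I" by blast
  have Iu: "I = (I \<inter> A) \<union> (I - A)" and Au: "A = (I \<inter> A) \<union> (A - I)" by blast+
  show ?thesis
  proof (cases "I \<inter> A = {}")
    case True
    have "B = I \<union> A"
      using cX cY decomp True ne d Iu Au eX eY by (elim disjE) (simp_all add: Un_ac)
    then show ?thesis using True by (simp add: R_def)
  next
    case False
    then obtain r where r: "r \<in> I \<inter> A" by blast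
    show ?thesis
    proof (cases "I - A = {}")
      case True
      then have "I \<subseteq> A" by blast
      moreover have "I \<inter> A = I" using \<open>I \<subseteq> A\<close> by blast
      moreover have "B = A - I"
        using cZ cY decomp True ne d Iu Au eZ eY \<open>I \<inter> A = I\<close> by (elim disjE) (simp_all add: Un_ac)
      ultimately show ?thesis by (simp add: R_def)
    next
      case X: False
      show ?thesis
      proof (cases "A - I = {}")
        case True
        then have "A \<subseteq> I" by blast
        moreover have "I \<inter> A = A" using \<open>A \<subseteq> I\<close> by blast
        moreover have "B = I - A"
          using cZ cX decomp True ne d Iu Au eZ eX \<open>I \<inter> A = A\<close> by (elim disjE) (simp_all add: Un_ac)
        ultimately show ?thesis by (simp add: R_def)
      next
        case False
        then obtain q where q: "q \<in> A - I" by blast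
        obtain p where p: "p \<in> I - A" using X by blast
        have f: "(r \<in> B \<longleftrightarrow> (p \<in> B \<or> q \<in> B)) \<and> \<not> (p \<in> B \<and> q \<in> B)" using f3 p q r by blast
        have "B = I \<or> B = A \<or> B = {}"
        proof (cases "p \<in> B")
          case pB: True
          then have qB: "q \<notin> B" "r \<in> B" using f by blast+
          have "I - A \<subseteq> B" using cX p pB by blast
          moreover have "I \<inter> A \<subseteq> B" using cZ r qB by blast
          moreover have "(A - I) \<inter> B = {}" using cY q qB by blast
          ultimately have "B = I" using sub by blast
          then show ?thesis by blast
        next
          case pB: False
          show ?thesis
          proof (cases "q \<in> B")
            case qB: True
            then have rB: "r \<in> B" using f by blast
            have "A - I \<subseteq> B" using cY q qB by blast
            moreover have "I \<inter> A \<subseteq> B" using cZ r rB by blast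
            moreover have "(I - A) \<inter> B = {}" using cX p pB by blast
            ultimately have "B = A" using sub by blast
            then show ?thesis by blast
          next
            case qB: False
            then have rB: "r \<notin> B" using f pB by blast
            have "(A - I) \<inter> B = {}" using cY q qB by blast
            moreover have "I \<inter> A \<inter> B = {}" using cZ r rB by blast
            moreover have "(I - A) \<inter> B = {}" using cX p pB by blast
            ultimately have "B = {}" using sub by blast
            then show ?thesis by blast
          qed
        qed
        then have False using ne d by blast
        then show ?thesis ..
      qed
    qed
  qed
qed

lemma sum_hyp: "(\<Sum>j\<in>J. x $ j) = 0 \<longleftrightarrow> x \<in> hyp J" by (simp add: hyp_def)

lemma R_eq:
  fixes I A B :: "'n::finite set"
  assumes "R I A B"
  shows "hyp A \<inter> hyp I = hyp B \<inter> hyp I"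
proof -
  have fin: "finite (X::'n set)" for X by simp
  { assume a: "I \<inter> A = {}" "B = I \<union> A"
    have "\<And>x. (\<Sum>j\<in>B. x $ j) = (\<Sum>j\<in>I. x $ j) + (\<Sum>j\<in>A. x $ j)"
      using a by (simp add: sum.union_disjoint)
    note eq = this
    have "x \<in> hyp A \<inter> hyp I \<longleftrightarrow> x \<in> hyp B \<inter> hyp I" for x
      unfolding hyp_def using eq[of x] by auto
    then have ?thesis by blast }
  moreover
  { assume a: "I \<subseteq> A" "B = A - I"
    have "A = I \<union> B" "I \<inter> B = {}" using a by auto
    then have "\<And>x. (\<Sum>j\<in>A. x $ j) = (\<Sum>j\<in>I. x $ j) + (\<Sum>j\<in>B. x $ j)"
      by (metis fin sum.union_disjoint)
    note eq = this
    have "x \<in> hyp A \<inter> hyp I \<longleftrightarrow> x \<in> hyp B \<inter> hyp I" for x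
      unfolding hyp_def using eq[of x] by auto
    then have ?thesis by blast }
  moreover
  { assume a: "A \<subseteq> I" "B = I - A"
    have "I = A \<union> B" "A \<inter> B = {}" using a by auto
    then have "\<And>x. (\<Sum>j\<in>I. x $ j) = (\<Sum>j\<in>A. x $ j) + (\<Sum>j\<in>B. x $ j)"
      by (metis fin sum.union_disjoint)
    note eq = this
    have "x \<in> hyp A \<inter> hyp I \<longleftrightarrow> x \<in> hyp B \<inter> hyp I" for x
      unfolding hyp_def using eq[of x] by auto
    then have ?thesis by blast }
  ultimately show ?thesis using assms unfolding R_def by blast
qed

lemma R_fun: "I \<noteq> {} \<Longrightarrow> A \<noteq> I \<Longrightarrow> R I A B \<Longrightarrow> R I A C \<Longrightarrow> B = C"
  unfolding R_def by auto

lemma circ_R: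
  assumes ne: "I \<noteq> {}" "A \<noteq> {}" "B \<noteq> {}" and d: "I \<noteq> A" "B \<noteq> I" "B \<noteq> A"
  shows "circuit_triple {I, A, B} \<longleftrightarrow> R I A B"
proof
  assume r: "R I A B"
  have c3: "card {I, A, B} = 3" using d by auto
  have nn: "\<forall>X\<in>{I, A, B}. X \<noteq> {}" using ne by auto
  have ex: "\<exists>X Y Z. {I, A, B} = {X, Y, Z} \<and> X \<inter> Y = {} \<and> Z = X \<union> Y"
    using r unfolding R_def
  proof (elim disjE conjE)
    assume a: "I \<inter> A = {}" "B = I \<union> A"
    show ?thesis by (rule exI[of _ I], rule exI[of _ A], rule exI[of _ B]) (use a in auto)
  next
    assume a: "I \<subseteq> A" "B = A - I"
    have "{I, A, B} = {I, B, A}" by auto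
    moreover have "I \<inter> B = {} \<and> A = I \<union> B" using a by auto
    ultimately show ?thesis by (intro exI[of _ I] exI[of _ B] exI[of _ A]) simp
  next
    assume a: "A \<subseteq> I" "B = I - A"
    have "{I, A, B} = {A, B, I}" by auto
    moreover have "A \<inter> B = {} \<and> I = A \<union> B" using a by auto
    ultimately show ?thesis by (intro exI[of _ A] exI[of _ B] exI[of _ I]) simp
  qed
  show "circuit_triple {I, A, B}" unfolding circuit_triple_def using c3 nn ex by simp
next
  assume "circuit_triple {I, A, B}"
  then obtain X Y Z where e: "{I, A, B} = {X, Y, Z}" and xy: "X \<inter> Y = {}" and z: "Z = X \<union> Y"
    and c3: "card {I, A, B} = 3"
    unfolding circuit_triple_def by (elim conjE exE) simp
  have dXYZ: "X \<noteq> Y" "Y \<noteq> Z" "X \<noteq> Z"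
  proof -
    have "card {X, Y, Z} = 3" using c3 e by simp
    then show "X \<noteq> Y" "Y \<noteq> Z" "X \<noteq> Z" by (auto simp: card_insert_if split: if_splits)
  qed
  have m: "X \<in> {I, A, B}" "Y \<in> {I, A, B}" "Z \<in> {I, A, B}" using e by auto
  have m2: "I \<in> {X, Y, Z}" "A \<in> {X, Y, Z}" "B \<in> {X, Y, Z}" using e by auto
  have "Z = I \<or> Z = A \<or> Z = B" using m by simp
  then show "R I A B"
  proof (elim disjE)
    assume zI: "Z = I"
    have "(X = A \<and> Y = B) \<or> (X = B \<and> Y = A)" using m m2 dXYZ zI d by auto
    then show ?thesis using xy z zI unfolding R_def by auto
  next
    assume zA: "Z = A"
    have "(X = I \<and> Y = B) \<or> (X = B \<and> Y = I)" using m m2 dXYZ zA d by auto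
    then show ?thesis using xy z zA unfolding R_def by auto
  next
    assume zB: "Z = B"
    have "(X = I \<and> Y = A) \<or> (X = A \<and> Y = I)" using m m2 dXYZ zB d by auto
    then show ?thesis using xy z zB unfolding R_def by auto
  qed
qed


lemma hyp_inj:
  fixes A B :: "'n::finite set"
  assumes "A \<noteq> {}" "B \<noteq> {}" "hyp A = hyp B"
  shows "A = B"
proof -
  have h: "hyp A \<inter> hyp A \<subseteq> hyp B" using assms by simp
  have "B \<subseteq> A" using F2[OF h] by blast
  moreover have "A \<subseteq> B"
  proof
    fix p assume p: "p \<in> A"
    obtain q where q: "q \<in> B" using assms by blast
    then have "q \<in> A" using \<open>B \<subseteq> A\<close> by blast
    then show "p \<in> B" using F1[OF h, of p q] p q by blast
  qed
  ultimately show ?thesis by blast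
qed

theorem lemma2p9:
  fixes F :: "'n::finite set set" and I :: "'n set"
  assumes "{} \<notin> F" and "I \<noteq> {}" and "I \<notin> F"
  shows "int (card (hyp ` F)) - int (card ((\<lambda>H. H \<inter> hyp I) ` (hyp ` F)))
         = int (card {T. circuit_triple T \<and> I \<in> T \<and> T - {I} \<subseteq> F})"
proof -
  define \<phi> where "\<phi> = (\<lambda>A. hyp A \<inter> hyp I)"
  define fib where "fib V = {A\<in>F. \<phi> A = V}" for V
  define W where "W = {V\<in>\<phi> ` F. card (fib V) = 2}"
  define Tr where "Tr = {T. circuit_triple T \<and> I \<in> T \<and> T - {I} \<subseteq> F}"
  have finF: "finite F" by simp
  have key: "\<phi> A = \<phi> B \<longleftrightarrow> R I A B" if "A \<in> F" "B \<in> F" "A \<noteq> B" for A B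
  proof
    assume "\<phi> A = \<phi> B"
    then have "hyp I \<inter> hyp A \<subseteq> hyp B" unfolding \<phi>_def by blast
    then show "R I A B" using incl_R that assms by metis
  next
    assume "R I A B" then show "\<phi> A = \<phi> B" unfolding \<phi>_def by (rule R_eq)
  qed
  have c1: "card (hyp ` F) = card F"
    by (rule card_image) (metis assms(1) hyp_inj inj_onI)
  have c2: "(\<lambda>H. H \<inter> hyp I) ` (hyp ` F) = \<phi> ` F" unfolding \<phi>_def by (simp add: image_image)
  have fibsub: "fib (\<phi> A) \<subseteq> insert A {C. R I A C}" if "A \<in> F" for A
    using key[OF that] unfolding fib_def by auto
  have Rle: "card {C. R I A C} \<le> 1" if "A \<in> F" for A
  proof -
    have "A \<noteq> I" using that assms by auto
    have "card {C. R I A C} \<le> Suc 0"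
      using R_fun[OF assms(2) \<open>A \<noteq> I\<close>] by (subst card_le_Suc0_iff_eq) auto
    then show ?thesis by simp
  qed
  have fibcard: "1 \<le> card (fib V) \<and> card (fib V) \<le> 2" if Vin: "V \<in> \<phi> ` F" for V
  proof -
    obtain A where A: "A \<in> F" "V = \<phi> A" using Vin by blast
    have "A \<in> fib V" using A unfolding fib_def by simp
    then have "1 \<le> card (fib V)" using card_0_eq[of "fib V"] by fastforce
    moreover have "card (fib V) \<le> card (insert A {C. R I A C})"
      using fibsub[OF A(1)] A(2) by (intro card_mono) auto
    moreover have "card (insert A {C. R I A C}) \<le> Suc (card {C. R I A C})"
      by (rule card_insert_le_m1) auto
    ultimately show ?thesis using Rle[OF A(1)] by linarith
  qed
  have s1: "card F = (\<Sum>V\<in>\<phi> ` F. card (fib V))"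
    unfolding fib_def using sum.image_gen[OF finF, of "\<lambda>_. 1::nat" \<phi>] by simp
  have s2: "(\<Sum>V\<in>\<phi> ` F. card (fib V)) = (\<Sum>V\<in>\<phi> ` F. 1 + (if card (fib V) = 2 then 1 else 0))"
  proof (rule sum.cong)
    fix V assume "V \<in> \<phi> ` F"
    from fibcard[OF this] show "card (fib V) = 1 + (if card (fib V) = 2 then 1 else 0)" by auto
  qed simp
  have s3: "(\<Sum>V\<in>\<phi> ` F. (if card (fib V) = 2 then 1 else 0)) = card W"
    unfolding W_def by (simp add: sum.inter_filter[symmetric])
  have cF: "card F = card (\<phi> ` F) + card W"
  proof -
    have "(\<Sum>V\<in>\<phi> ` F. 1 + (if card (fib V) = 2 then 1 else 0)) = card (\<phi> ` F) + card W"
      by (simp only: sum.distrib s3) simp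
    then show ?thesis using s1 s2 by simp
  qed
  have inj: "inj_on (\<lambda>V. insert I (fib V)) W"
  proof (rule inj_onI)
    fix V V' assume V: "V \<in> W" "V' \<in> W" and e: "insert I (fib V) = insert I (fib V')"
    have "I \<notin> fib V" "I \<notin> fib V'" using assms unfolding fib_def by auto
    then have "fib V = fib V'" using e by (metis insert_ident)
    obtain A where "A \<in> F" "V = \<phi> A" using V unfolding W_def by blast
    then have "A \<in> fib V'" using \<open>fib V = fib V'\<close> unfolding fib_def by auto
    then show "V = V'" using \<open>V = \<phi> A\<close> unfolding fib_def by auto
  qed
  have img: "(\<lambda>V. insert I (fib V)) ` W = Tr"
  proof
    show "(\<lambda>V. insert I (fib V)) ` W \<subseteq> Tr"
    proof
      fix T assume "T \<in> (\<lambda>V. insert I (fib V)) ` W"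
      then obtain V where V: "V \<in> W" "T = insert I (fib V)" by blast
      then have "card (fib V) = 2" unfolding W_def by simp
      then obtain A B where AB: "fib V = {A, B}" "A \<noteq> B" by (auto simp: card_2_iff)
      then have AF: "A \<in> F" "B \<in> F" "\<phi> A = V" "\<phi> B = V" unfolding fib_def by blast+
      then have "R I A B" using key AB by metis
      moreover have "I \<noteq> A" "B \<noteq> I" "A \<noteq> {}" "B \<noteq> {}" using AF assms by auto
      ultimately have "circuit_triple {I, A, B}" using circ_R AB assms by metis
      then show "T \<in> Tr" unfolding Tr_def using V AB AF by auto
    qed
  next
    show "Tr \<subseteq> (\<lambda>V. insert I (fib V)) ` W"
    proof
      fix T assume "T \<in> Tr"
      then have ct: "circuit_triple T" and IT: "I \<in> T" and TF: "T - {I} \<subseteq> F" unfolding Tr_def by auto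
      then have "card T = 3" unfolding circuit_triple_def by simp
      then obtain x y z where xyz: "T = {x, y, z}" "x \<noteq> y" "y \<noteq> z" "x \<noteq> z" by (auto simp: card_3_iff)
      have "\<exists>A B. T = {I, A, B} \<and> I \<noteq> A \<and> B \<noteq> I \<and> B \<noteq> A"
        using IT xyz by (auto simp: insert_commute)
      then obtain A B where AB: "T = {I, A, B}" "I \<noteq> A" "B \<noteq> I" "B \<noteq> A" by blast
      have AF: "A \<in> F" "B \<in> F" using TF AB by auto
      have ne: "A \<noteq> {}" "B \<noteq> {}" using AF assms by auto
      have "R I A B" using circ_R[OF assms(2) ne AB(2-4)] ct AB(1) by simp
      then have phe: "\<phi> A = \<phi> B" using key AF AB by metis
      have "fib (\<phi> A) = {A, B}"
      proof
        show "{A, B} \<subseteq> fib (\<phi> A)" using AF phe unfolding fib_def by auto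
        show "fib (\<phi> A) \<subseteq> {A, B}"
        proof
          fix C assume "C \<in> fib (\<phi> A)"
          then have C: "C \<in> F" "\<phi> C = \<phi> A" unfolding fib_def by auto
          show "C \<in> {A, B}"
          proof (cases "C = A")
            case False
            then have "R I A C" using key[OF AF(1) C(1)] C by metis
            then have "C = B" using R_fun[OF assms(2) AB(2)[symmetric] \<open>R I A B\<close>] by simp
            then show ?thesis by simp
          qed simp
        qed
      qed
      then have "\<phi> A \<in> W" unfolding W_def using AF AB by auto
      moreover have "T = insert I (fib (\<phi> A))" using AB \<open>fib (\<phi> A) = {A, B}\<close> by simp
      ultimately show "T \<in> (\<lambda>V. insert I (fib V)) ` W" by blast
    qed
  qed
  have cT: "card Tr = card W" using card_image[OF inj] img by simp
  show ?thesis using c1 c2 cF cT unfolding Tr_def by simp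
qed

end
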